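(* Let $(G_s)_{s\le0}$ be an unfolding sequence in which every graph is isomorphic to $G_0=G$ via fixed isomorphisms, and for an edge $e$ of $G$ let $e_s$ denote the corresponding edge of $G_s$. If $(G_s)_{s\le0}$ is reduced, then for all edges $e,e'$ of $G$ and every $K>0$ there exists $N<0$ such that for each $s<N$, $\langle e'_0,\phi_{s,0}(e_s)\rangle>K$.
   Context: A graph is a finite 1-dimensional CW complex; a morphism maps vertices to vertices and is locally injective on edge interiors. An unfolding sequence is $(G_s)_{s\le0}$ of finite connected graphs of rank at least 2 with morphisms $G_s\to G_{s+1}$ that are homotopy equivalences, all compositions $\phi_{r,s}:G_r\to G_s$ ($r<s$) being morphisms. It is reduced if whenever subgraphs $H_t\subset G_t$ and $s_0<0$ satisfy $\phi_{r,s}(H_r)\subseteq H_s$ for all $r<s\le s_0$, then either $H_s=G_s$ for all $s\le s_0$ or $H_s$ contains no edges for all large $-s$. For finite directed edge paths $\gamma,\omega$, $\langle\gamma,\omega\rangle$ is the number of times $\gamma$ appears as a (directed) subpath of $\omega$.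
   Formalization: The count $\langle e'_0,\phi_{s,0}(e_s)\rangle$ is taken over both orientations of e': it is the number of occurrences of $e'_0$ plus the number of occurrences of its reverse as subpaths of $\phi_{s,0}(e_s)$. The statement above fails without it. *)

theory Defs
  imports Complex_Main
begin

text \<open>Combinatorial model of a finite graph (1-dimensional CW complex):
  vertex set V, set E of directed edges, origin map src, fixed-point-free
  involution rv (edge reversal). Loops and multiple edges are allowed.\<close>

definition tgt :: "('e \<Rightarrow> 'v) \<Rightarrow> ('e \<Rightarrow> 'e) \<Rightarrow> 'e \<Rightarrow> 'v" where
  "tgt src rv e = src (rv e)"

definition is_graph :: "'v set \<Rightarrow> 'e set \<Rightarrow> ('e \<Rightarrow> 'v) \<Rightarrow> ('e \<Rightarrow> 'e) \<Rightarrow> bool" where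
  "is_graph V E src rv \<longleftrightarrow> finite V \<and> finite E \<and>
     (\<forall>e\<in>E. rv e \<in> E \<and> rv e \<noteq> e \<and> rv (rv e) = e \<and> src e \<in> V)"

definition is_path :: "'e set \<Rightarrow> ('e \<Rightarrow> 'v) \<Rightarrow> ('e \<Rightarrow> 'e) \<Rightarrow> 'e list \<Rightarrow> bool" where
  "is_path E src rv p \<longleftrightarrow> set p \<subseteq> E \<and>
     (\<forall>i. Suc i < length p \<longrightarrow> tgt src rv (p ! i) = src (p ! Suc i))"

definition reduced_path :: "('e \<Rightarrow> 'e) \<Rightarrow> 'e list \<Rightarrow> bool" where
  "reduced_path rv p \<longleftrightarrow> (\<forall>i. Suc i < length p \<longrightarrow> p ! Suc i \<noteq> rv (p ! i))"

definition rev_path :: "('e \<Rightarrow> 'e) \<Rightarrow> 'e list \<Rightarrow> 'e list" where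
  "rev_path rv p = rev (map rv p)"

fun freered :: "('e \<Rightarrow> 'e) \<Rightarrow> 'e list \<Rightarrow> 'e list" where
  "freered rv [] = []"
| "freered rv (x # xs) =
     (case freered rv xs of [] \<Rightarrow> [x] | y # ys \<Rightarrow> (if y = rv x then ys else x # y # ys))"

definition connected_graph :: "'v set \<Rightarrow> 'e set \<Rightarrow> ('e \<Rightarrow> 'v) \<Rightarrow> ('e \<Rightarrow> 'e) \<Rightarrow> bool" where
  "connected_graph V E src rv \<longleftrightarrow> (\<forall>u\<in>V. \<forall>w\<in>V. \<exists>p. is_path E src rv p \<and>
      (p = [] \<longrightarrow> u = w) \<and> (p \<noteq> [] \<longrightarrow> src (hd p) = u \<and> tgt src rv (last p) = w))"

text \<open>Rank of a connected graph = 1 - Euler characteristic = #edges - #vertices + 1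
  (each geometric edge corresponds to two directed edges).\<close>
definition graph_rank :: "'v set \<Rightarrow> 'e set \<Rightarrow> int" where
  "graph_rank V E = int (card E) div 2 - int (card V) + 1"

text \<open>A map G \<rightarrow> G: vertex map and, for each directed edge, its image edge path.\<close>
type_synonym ('v, 'e) gmap = "('v \<Rightarrow> 'v) \<times> ('e \<Rightarrow> 'e list)"

text \<open>Morphism: vertices to vertices, each edge to a nonempty reduced edge path
  (= locally injective on the edge interior), compatible with endpoints and reversal.\<close>
definition is_morphism :: "'v set \<Rightarrow> 'e set \<Rightarrow> ('e \<Rightarrow> 'v) \<Rightarrow> ('e \<Rightarrow> 'e) \<Rightarrow> ('v, 'e) gmap \<Rightarrow> bool" where
  "is_morphism V E src rv g \<longleftrightarrow> (\<forall>v\<in>V. fst g v \<in> V) \<and>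
     (\<forall>e\<in>E. snd g e \<noteq> [] \<and> is_path E src rv (snd g e) \<and> reduced_path rv (snd g e) \<and>
        src (hd (snd g e)) = fst g (src e) \<and> tgt src rv (last (snd g e)) = fst g (tgt src rv e) \<and>
        snd g (rv e) = rev_path rv (snd g e))"

definition path_image :: "('v, 'e) gmap \<Rightarrow> 'e list \<Rightarrow> 'e list" where
  "path_image g p = concat (map (snd g) p)"

text \<open>Reduced closed edge paths at v: the elements of the fundamental group pi_1(G, v).\<close>
definition loops_at :: "'e set \<Rightarrow> ('e \<Rightarrow> 'v) \<Rightarrow> ('e \<Rightarrow> 'e) \<Rightarrow> 'v \<Rightarrow> 'e list set" where
  "loops_at E src rv v = {p. is_path E src rv p \<and> reduced_path rv p \<and>
      (p \<noteq> [] \<longrightarrow> src (hd p) = v \<and> tgt src rv (last p) = v)}"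

text \<open>Homotopy equivalence (between connected graphs, i.e. aspherical spaces, this is
  equivalent to inducing isomorphisms on fundamental groups, by Whitehead's theorem).\<close>
definition is_homotopy_equiv :: "'v set \<Rightarrow> 'e set \<Rightarrow> ('e \<Rightarrow> 'v) \<Rightarrow> ('e \<Rightarrow> 'e) \<Rightarrow> ('v, 'e) gmap \<Rightarrow> bool" where
  "is_homotopy_equiv V E src rv g \<longleftrightarrow> (\<forall>v\<in>V.
     bij_betw (\<lambda>p. freered rv (path_image g p)) (loops_at E src rv v) (loops_at E src rv (fst g v)))"

definition gid :: "('v, 'e) gmap" where
  "gid = (id, \<lambda>e. [e])"

text \<open>gcomp g h = g \<circ> h (apply h first).\<close>
definition gcomp :: "('v, 'e) gmap \<Rightarrow> ('v, 'e) gmap \<Rightarrow> ('v, 'e) gmap" where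
  "gcomp g h = (fst g \<circ> fst h, \<lambda>e. path_image g (snd h e))"

text \<open>All graphs G_s are identified with G via the fixed isomorphisms; the level s = -n
  is indexed by the natural number n.  f k is the map G_{-(k+1)} \<rightarrow> G_{-k}.
  phi f n m (n \<le> m) is the composition G_{-m} \<rightarrow> G_{-n}, i.e. phi_{-m,-n}.\<close>
fun phi :: "(nat \<Rightarrow> ('v, 'e) gmap) \<Rightarrow> nat \<Rightarrow> nat \<Rightarrow> ('v, 'e) gmap" where
  "phi f n 0 = gid"
| "phi f n (Suc m) = (if Suc m \<le> n then gid else gcomp (phi f n m) (f m))"

definition unfolding_seq :: "'v set \<Rightarrow> 'e set \<Rightarrow> ('e \<Rightarrow> 'v) \<Rightarrow> ('e \<Rightarrow> 'e) \<Rightarrow> (nat \<Rightarrow> ('v, 'e) gmap) \<Rightarrow> bool" where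
  "unfolding_seq V E src rv f \<longleftrightarrow> is_graph V E src rv \<and> connected_graph V E src rv \<and>
     graph_rank V E \<ge> 2 \<and>
     (\<forall>k. is_morphism V E src rv (f k) \<and> is_homotopy_equiv V E src rv (f k)) \<and>
     (\<forall>n m. n < m \<longrightarrow> is_morphism V E src rv (phi f n m))"

definition is_subgraph :: "'v set \<Rightarrow> 'e set \<Rightarrow> ('e \<Rightarrow> 'v) \<Rightarrow> ('e \<Rightarrow> 'e) \<Rightarrow> 'v set \<times> 'e set \<Rightarrow> bool" where
  "is_subgraph V E src rv H \<longleftrightarrow> fst H \<subseteq> V \<and> snd H \<subseteq> E \<and>
     (\<forall>e\<in>snd H. rv e \<in> snd H \<and> src e \<in> fst H)"

definition maps_into :: "('v, 'e) gmap \<Rightarrow> 'v set \<times> 'e set \<Rightarrow> 'v set \<times> 'e set \<Rightarrow> bool" where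
  "maps_into g H H' \<longleftrightarrow> fst g ` fst H \<subseteq> fst H' \<and> (\<forall>e\<in>snd H. set (snd g e) \<subseteq> snd H')"

text \<open>Reduced: s_0 = -n0 < 0 corresponds to n0 \<ge> 1; r < s \<le> s_0 to n0 \<le> n < m.\<close>
definition reduced_seq :: "'v set \<Rightarrow> 'e set \<Rightarrow> ('e \<Rightarrow> 'v) \<Rightarrow> ('e \<Rightarrow> 'e) \<Rightarrow> (nat \<Rightarrow> ('v, 'e) gmap) \<Rightarrow> bool" where
  "reduced_seq V E src rv f \<longleftrightarrow> (\<forall>(H :: nat \<Rightarrow> 'v set \<times> 'e set) n0.
     (\<forall>n. is_subgraph V E src rv (H n)) \<and> n0 \<ge> 1 \<and>
     (\<forall>n m. n0 \<le> n \<and> n < m \<longrightarrow> maps_into (phi f n m) (H m) (H n)) \<longrightarrow>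
     (\<forall>n\<ge>n0. H n = (V, E)) \<or> (\<exists>M. \<forall>n\<ge>M. snd (H n) = {}))"

text \<open>\<langle>\<gamma>,\<omega>\<rangle>: number of occurrences of \<gamma> as a subpath of \<omega>.\<close>
definition occ :: "'e list \<Rightarrow> 'e list \<Rightarrow> nat" where
  "occ \<gamma> \<omega> = card {i. i + length \<gamma> \<le> length \<omega> \<and> take (length \<gamma>) (drop i \<omega>) = \<gamma>}"

end

theory Submission
  imports Defs
begin

lemma is_path_succ: "is_path E src rv p \<longleftrightarrow> set p \<subseteq> E \<and> successively (\<lambda>a b. tgt src rv a = src b) p"
  unfolding is_path_def successively_conv_nth by auto

lemma reduced_succ: "reduced_path rv p \<longleftrightarrow> successively (\<lambda>a b. b \<noteq> rv a) p"
  unfolding reduced_path_def successively_conv_nth by auto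

lemma succ_take: "successively P xs \<Longrightarrow> successively P (take k xs)"
  by (metis append_take_drop_id successively_append_iff)

lemma succ_drop: "successively P xs \<Longrightarrow> successively P (drop k xs)"
  by (metis append_take_drop_id successively_append_iff)

lemma path_take: "is_path E src rv p \<Longrightarrow> is_path E src rv (take k p)"
  unfolding is_path_succ by (metis succ_take set_take_subset subset_trans)
lemma path_drop: "is_path E src rv p \<Longrightarrow> is_path E src rv (drop k p)"
  unfolding is_path_succ by (metis succ_drop set_drop_subset subset_trans)
lemma red_take: "reduced_path rv p \<Longrightarrow> reduced_path rv (take k p)"
  unfolding reduced_succ by (rule succ_take)
lemma red_drop: "reduced_path rv p \<Longrightarrow> reduced_path rv (drop k p)"
  unfolding reduced_succ by (rule succ_drop)

lemma path_append: "is_path E src rv (xs @ ys) \<longleftrightarrow> is_path E src rv xs \<and> is_path E src rv ys \<and>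
   (xs \<noteq> [] \<longrightarrow> ys \<noteq> [] \<longrightarrow> tgt src rv (last xs) = src (hd ys))"
  unfolding is_path_succ successively_append_iff by auto

lemma red_append: "reduced_path rv (xs @ ys) \<longleftrightarrow> reduced_path rv xs \<and> reduced_path rv ys \<and>
   (xs \<noteq> [] \<longrightarrow> ys \<noteq> [] \<longrightarrow> hd ys \<noteq> rv (last xs))"
  unfolding reduced_succ successively_append_iff by auto

lemma path_Cons: "is_path E src rv (x # xs) \<longleftrightarrow> x \<in> E \<and> is_path E src rv xs \<and>
   (xs \<noteq> [] \<longrightarrow> tgt src rv x = src (hd xs))"
  using path_append[of E src rv "[x]" xs] unfolding is_path_def by auto

lemma red_Cons: "reduced_path rv (x # xs) \<longleftrightarrow> reduced_path rv xs \<and>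
   (xs \<noteq> [] \<longrightarrow> hd xs \<noteq> rv x)"
  using red_append[of rv "[x]" xs] unfolding reduced_path_def by auto

lemma freered_set: "set (freered rv xs) \<subseteq> set xs"
proof (induction xs)
  case Nil then show ?case by simp
next
  case (Cons x xs)
  then show ?case by (auto split: list.splits)
qed

lemma path_image_append: "path_image g (xs @ ys) = path_image g xs @ path_image g ys"
  unfolding path_image_def by simp

lemma path_image_concat: "path_image g (concat xss) = concat (map (path_image g) xss)"
  unfolding path_image_def by (induction xss) auto

lemma gcomp_assoc: "gcomp (gcomp g h) k = gcomp g (gcomp h k)"
  unfolding gcomp_def by (simp add: path_image_def path_image_concat[unfolded path_image_def] comp_def)

lemma gcomp_gid: "gcomp g gid = g"
  unfolding gcomp_def gid_def path_image_def by (cases g) auto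

lemma phi_le: "m \<le> n \<Longrightarrow> phi f n m = gid"
  by (induction m) auto

lemma phi_Suc: "n \<le> m \<Longrightarrow> phi f n (Suc m) = gcomp (phi f n m) (f m)"
  by simp

lemma phi_comp: "n \<le> m \<Longrightarrow> m \<le> k \<Longrightarrow> phi f n k = gcomp (phi f n m) (phi f m k)"
proof (induction k)
  case 0 then show ?case by (simp add: gcomp_gid)
next
  case (Suc k)
  show ?case
  proof (cases "m = Suc k")
    case True then show ?thesis using phi_le[of "Suc k" "Suc k" f] by (simp add: gcomp_gid)
  next
    case False
    then have "m \<le> k" using Suc by auto
    then have "phi f n (Suc k) = gcomp (phi f n k) (f k)" using Suc by simp
    also have "\<dots> = gcomp (gcomp (phi f n m) (phi f m k)) (f k)" using Suc \<open>m \<le> k\<close> by simp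
    also have "\<dots> = gcomp (phi f n m) (phi f m (Suc k))" using \<open>m \<le> k\<close> by (simp add: gcomp_assoc)
    finally show ?thesis .
  qed
qed

lemma snd_phi_comp: "n \<le> m \<Longrightarrow> m \<le> k \<Longrightarrow>
   snd (phi f n k) x = path_image (phi f n m) (snd (phi f m k) x)"
  using phi_comp[of n m k f] unfolding gcomp_def by simp

lemma fst_phi_comp: "n \<le> m \<Longrightarrow> m \<le> k \<Longrightarrow>
   fst (phi f n k) v = fst (phi f n m) (fst (phi f m k) v)"
  using phi_comp[of n m k f] unfolding gcomp_def by simp

lemma phi_01: "phi f 0 1 = ((fst (f 0)), snd (f 0))"
  by (simp add: gcomp_def gid_def path_image_def)


locale gr =
  fixes V :: "'v set" and E :: "'e set" and src :: "'e \<Rightarrow> 'v" and rv :: "'e \<Rightarrow> 'e"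
  assumes G: "is_graph V E src rv"
begin

lemma rvE: "x \<in> E \<Longrightarrow> rv x \<in> E" using G unfolding is_graph_def by auto
lemma rvrv: "x \<in> E \<Longrightarrow> rv (rv x) = x" using G unfolding is_graph_def by auto
lemma rvne: "x \<in> E \<Longrightarrow> rv x \<noteq> x" using G unfolding is_graph_def by auto
lemma srcV: "x \<in> E \<Longrightarrow> src x \<in> V" using G unfolding is_graph_def by auto
lemma tgt_rv: "x \<in> E \<Longrightarrow> tgt src rv (rv x) = src x" unfolding tgt_def using rvrv by simp
lemma src_rv: "src (rv x) = tgt src rv x" unfolding tgt_def by simp
lemma tgtV: "x \<in> E \<Longrightarrow> tgt src rv x \<in> V" unfolding tgt_def using rvE srcV by simp

lemma path_rev: assumes "is_path E src rv p" shows "is_path E src rv (rev_path rv p)"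
proof -
  have s: "set p \<subseteq> E" using assms unfolding is_path_succ by auto
  have "successively (\<lambda>a b. tgt src rv a = src b) p" using assms unfolding is_path_succ by auto
  then have "successively (\<lambda>x y. tgt src rv (rv y) = src (rv x)) p"
  proof (rule successively_mono)
    fix x y assume "x \<in> set p" "y \<in> set p" "tgt src rv x = src y"
    then show "tgt src rv (rv y) = src (rv x)" using s tgt_rv[of y] src_rv[of x] by (simp add: subset_iff)
  qed
  moreover have "set (rev (map rv p)) \<subseteq> E" using s rvE by auto
  ultimately show ?thesis unfolding is_path_succ rev_path_def successively_rev successively_map
    by blast
qed

lemma red_rev: assumes "is_path E src rv p" "reduced_path rv p" shows "reduced_path rv (rev_path rv p)"
proof -
  have s: "set p \<subseteq> E" using assms unfolding is_path_succ by auto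
  have "successively (\<lambda>a b. b \<noteq> rv a) p" using assms unfolding reduced_succ by auto
  then have "successively (\<lambda>x y. rv x \<noteq> rv (rv y)) p"
  proof (rule successively_mono)
    fix x y assume "x \<in> set p" "y \<in> set p" "y \<noteq> rv x"
    then show "rv x \<noteq> rv (rv y)" using s rvrv[of y] by (metis subsetD)
  qed
  then show ?thesis unfolding reduced_succ rev_path_def successively_rev successively_map .
qed

lemma set_rev_path: "set (rev_path rv p) = rv ` set p" unfolding rev_path_def by auto

lemma hd_rev_path: "p \<noteq> [] \<Longrightarrow> hd (rev_path rv p) = rv (last p)"
  unfolding rev_path_def by (simp add: hd_rev last_map)
lemma last_rev_path: "p \<noteq> [] \<Longrightarrow> last (rev_path rv p) = rv (hd p)"
  unfolding rev_path_def by (simp add: last_rev hd_map)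

lemma freered_path:
  assumes "is_path E src rv p" "p \<noteq> []"
  shows "is_path E src rv (freered rv p) \<and> reduced_path rv (freered rv p) \<and>
     (freered rv p = [] \<longrightarrow> src (hd p) = tgt src rv (last p)) \<and>
     (freered rv p \<noteq> [] \<longrightarrow> src (hd (freered rv p)) = src (hd p) \<and>
         tgt src rv (last (freered rv p)) = tgt src rv (last p))"
  using assms
proof (induction p)
  case Nil then show ?case by simp
next
  case (Cons x xs)
  have xE: "x \<in> E" and pxs: "is_path E src rv xs" and j: "xs \<noteq> [] \<longrightarrow> tgt src rv x = src (hd xs)"
    using Cons.prems by (simp_all add: path_Cons)
  show ?case
  proof (cases "xs = []")
    case True then show ?thesis using xE unfolding is_path_def reduced_path_def by auto
  next
    case False
    note IH = Cons.IH[OF pxs False]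
    have lx: "last (x # xs) = last xs" using False by simp
    show ?thesis
    proof (cases "freered rv xs")
      case Nil
      then show ?thesis using IH j False xE lx unfolding is_path_def reduced_path_def by auto
    next
      case (Cons y ys)
      have py: "is_path E src rv (y # ys)" and ry: "reduced_path rv (y # ys)"
        and sy: "src y = src (hd xs)" and ty: "tgt src rv (last (y # ys)) = tgt src rv (last xs)"
        using IH Cons by auto
      have yE: "y \<in> E" using py by (simp add: path_Cons)
      show ?thesis
      proof (cases "y = rv x")
        case True
        then have fr: "freered rv (x # xs) = ys" using Cons by simp
        have pys: "is_path E src rv ys" and rys: "reduced_path rv ys" using py ry by (simp_all add: path_Cons red_Cons)
        show ?thesis
        proof (cases "ys = []")
          case True
          then have "tgt src rv y = tgt src rv (last xs)" using ty by simp
          then have "src x = tgt src rv (last xs)" using \<open>y = rv x\<close> tgt_rv xE by simp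
          then show ?thesis using fr True lx unfolding is_path_def reduced_path_def by simp
        next
          case False
          have "src (hd ys) = tgt src rv y" using py False by (simp add: path_Cons)
          then have "src (hd ys) = src x" using \<open>y = rv x\<close> tgt_rv xE by simp
          moreover have "last ys = last (y # ys)" using False by simp
          ultimately show ?thesis using fr False pys rys ty lx by simp
        qed
      next
        case False
        then have fr: "freered rv (x # xs) = x # y # ys" using Cons by simp
        have "is_path E src rv (x # y # ys)" using path_Cons[of E src rv x "y # ys"] xE py sy j \<open>xs \<noteq> []\<close> by simp
        moreover have "reduced_path rv (x # y # ys)" using red_Cons[of rv x "y # ys"] ry False by simp
        ultimately show ?thesis using fr ty lx by simp
      qed
    qed
  qed
qed

end


lemma sum_list_lb: "(\<And>y. y \<in> set l \<Longrightarrow> c \<le> g y) \<Longrightarrow> c * length l \<le> sum_list (map g l)"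
  for c :: nat
  by (induction l) (auto simp: add_mono)

locale us = gr +
  fixes f :: "nat \<Rightarrow> ('v, 'e) gmap"
  assumes U: "unfolding_seq V E src rv f"
    and R: "reduced_seq V E src rv f"
begin

lemma conn: "connected_graph V E src rv" using U unfolding unfolding_seq_def by auto
lemma rank2: "graph_rank V E \<ge> 2" using U unfolding unfolding_seq_def by auto
lemma morph_f: "is_morphism V E src rv (f k)" using U unfolding unfolding_seq_def by auto
lemma he_f: "is_homotopy_equiv V E src rv (f k)" using U unfolding unfolding_seq_def by auto
lemma morph_phi: "n < m \<Longrightarrow> is_morphism V E src rv (phi f n m)" using U unfolding unfolding_seq_def by auto

lemma phi_props:
  assumes "n \<le> m" "x \<in> E"
  shows "snd (phi f n m) x \<noteq> [] \<and> set (snd (phi f n m) x) \<subseteq> E \<and>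
         snd (phi f n m) (rv x) = rev_path rv (snd (phi f n m) x)"
proof (cases "n = m")
  case True
  then show ?thesis using phi_le[of m n f] assms by (simp add: gid_def rev_path_def)
next
  case False
  then have "is_morphism V E src rv (phi f n m)" using morph_phi assms by simp
  then show ?thesis using assms unfolding is_morphism_def is_path_def by auto
qed

lemma phi_V: "n \<le> m \<Longrightarrow> v \<in> V \<Longrightarrow> fst (phi f n m) v \<in> V"
proof (cases "n = m")
  case True
  then show "v \<in> V \<Longrightarrow> ?thesis" using phi_le[of m n f] by (simp add: gid_def)
next
  case False
  assume "n \<le> m" "v \<in> V"
  then have "is_morphism V E src rv (phi f n m)" using morph_phi False by simp
  then show ?thesis using \<open>v \<in> V\<close> unfolding is_morphism_def by auto
qed

lemma phi_red: "n < m \<Longrightarrow> x \<in> E \<Longrightarrow> is_path E src rv (snd (phi f n m) x) \<and> reduced_path rv (snd (phi f n m) x)"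
  using morph_phi[of n m] unfolding is_morphism_def by auto

lemma fam:
  fixes Pp :: "nat \<Rightarrow> 'e \<Rightarrow> bool"
  assumes n0: "n0 \<ge> 1"
    and rvc: "\<And>n x. x \<in> E \<Longrightarrow> Pp n x \<Longrightarrow> Pp n (rv x)"
    and inv: "\<And>n m x y. n0 \<le> n \<Longrightarrow> n < m \<Longrightarrow> x \<in> E \<Longrightarrow> Pp m x \<Longrightarrow>
                 y \<in> set (snd (phi f n m) x) \<Longrightarrow> Pp n y"
  shows "(\<forall>n\<ge>n0. \<forall>x\<in>E. Pp n x) \<or> (\<exists>M. \<forall>n\<ge>M. \<forall>x\<in>E. \<not> Pp n x)"
proof -
  define H where "H = (\<lambda>n. (V, {x \<in> E. Pp n x}))"
  have sg: "\<forall>n. is_subgraph V E src rv (H n)"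
    unfolding H_def is_subgraph_def using rvE rvc srcV by auto
  have mi: "\<forall>n m. n0 \<le> n \<and> n < m \<longrightarrow> maps_into (phi f n m) (H m) (H n)"
  proof (intro allI impI)
    fix n m assume nm: "n0 \<le> n \<and> n < m"
    have "fst (phi f n m) ` V \<subseteq> V" using phi_V nm by auto
    moreover have "\<forall>e\<in>{x \<in> E. Pp m x}. set (snd (phi f n m) e) \<subseteq> {x \<in> E. Pp n x}"
    proof
      fix e assume e: "e \<in> {x \<in> E. Pp m x}"
      show "set (snd (phi f n m) e) \<subseteq> {x \<in> E. Pp n x}"
      proof
        fix y assume y: "y \<in> set (snd (phi f n m) e)"
        have "y \<in> E" using phi_props[of n m e] nm e y by auto
        moreover have "Pp n y" using inv[of n m e y] nm e y by auto
        ultimately show "y \<in> {x \<in> E. Pp n x}" by simp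
      qed
    qed
    ultimately show "maps_into (phi f n m) (H m) (H n)" unfolding maps_into_def H_def by simp
  qed
  have "(\<forall>n\<ge>n0. H n = (V, E)) \<or> (\<exists>M. \<forall>n\<ge>M. snd (H n) = {})"
    using R sg mi n0 unfolding reduced_seq_def by blast
  then show ?thesis
  proof
    assume "\<forall>n\<ge>n0. H n = (V, E)"
    then have "\<forall>n\<ge>n0. {x \<in> E. Pp n x} = E" unfolding H_def by auto
    then show ?thesis by blast
  next
    assume "\<exists>M. \<forall>n\<ge>M. snd (H n) = {}"
    then obtain M where "\<forall>n\<ge>M. snd (H n) = {}" by blast
    then have "\<forall>n\<ge>M. \<forall>x\<in>E. \<not> Pp n x" unfolding H_def by auto
    then show ?thesis by blast
  qed
qed

lemma Vne: "V \<noteq> {}"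
proof
  assume V0: "V = {}"
  have "E \<noteq> {}"
  proof
    assume "E = {}" then have "graph_rank V E = 1" using V0 unfolding graph_rank_def by simp
    then show False using rank2 by simp
  qed
  then obtain x where "x \<in> E" by blast
  then show False using srcV V0 by auto
qed

lemma other_edge: "y \<in> E \<Longrightarrow> \<exists>x\<in>E. x \<noteq> y \<and> x \<noteq> rv y"
proof (rule ccontr)
  assume y: "y \<in> E" and "\<not> (\<exists>x\<in>E. x \<noteq> y \<and> x \<noteq> rv y)"
  then have "E \<subseteq> {y, rv y}" by auto
  then have "card E \<le> card {y, rv y}" by (intro card_mono) simp_all
  also have "\<dots> \<le> 2" by (simp add: card_insert_if)
  finally have "card E \<le> 2" .
  moreover have "card V \<ge> 1" using Vne G unfolding is_graph_def by (simp add: Suc_leI card_gt_0_iff)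
  ultimately have "graph_rank V E \<le> 1" unfolding graph_rank_def by linarith
  then show False using rank2 by simp
qed

lemma len_comp: "n \<le> m \<Longrightarrow> m \<le> k \<Longrightarrow>
  length (snd (phi f n k) x) = sum_list (map (\<lambda>y. length (snd (phi f n m) y)) (snd (phi f m k) x))"
  using snd_phi_comp[of n m k f x] unfolding path_image_def by (simp add: length_concat comp_def)

lemma single:
  assumes "N \<le> n" "n \<le> m" "x \<in> E" "length (snd (phi f N m) x) = 1"
  shows "\<exists>z\<in>E. snd (phi f n m) x = [z] \<and> snd (phi f N n) z = snd (phi f N m) x"
proof -
  let ?l = "snd (phi f n m) x"
  have l: "?l \<noteq> []" "set ?l \<subseteq> E" using phi_props[of n m x] assms by auto
  have "1 * length ?l \<le> sum_list (map (\<lambda>y. length (snd (phi f N n) y)) ?l)"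
  proof (rule sum_list_lb)
    fix y assume "y \<in> set ?l"
    then show "1 \<le> length (snd (phi f N n) y)" using phi_props[of N n y] assms l by (auto simp: Suc_le_eq)
  qed
  then have "length ?l \<le> 1" using len_comp[of N n m x] assms by simp
  then obtain z where z: "?l = [z]" using l by (cases ?l) auto
  then have "z \<in> E" using l by auto
  moreover have "snd (phi f N m) x = snd (phi f N n) z"
    using snd_phi_comp[of N n m f x] assms z unfolding path_image_def by simp
  ultimately show ?thesis using z by auto
qed


lemma phi_rv_all: "x \<in> E \<Longrightarrow> snd (phi f n m) (rv x) = rev_path rv (snd (phi f n m) x)"
proof (cases "n \<le> m")
  case True
  then show "x \<in> E \<Longrightarrow> ?thesis" using phi_props by auto
next
  case False
  then show ?thesis using phi_le[of m n f] by (simp add: gid_def rev_path_def)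
qed

lemma grow1:
  assumes N1: "N \<ge> 1"
  shows "\<exists>m\<ge>N. \<forall>x\<in>E. 2 \<le> length (snd (phi f N m) x)"
proof (rule ccontr)
  assume neg: "\<not> ?thesis"
  define Ps where "Ps = (\<lambda>m. {y. \<exists>x\<in>E. snd (phi f N m) x = [y]})"
  have PsE: "Ps m \<subseteq> E" if "N \<le> m" for m
  proof
    fix y assume "y \<in> Ps m"
    then obtain x where "x \<in> E" "snd (phi f N m) x = [y]" unfolding Ps_def by auto
    then show "y \<in> E" using phi_props[of N m x] that by auto
  qed
  have Psne: "Ps m \<noteq> {}" if mN: "N \<le> m" for m
  proof -
    obtain x where x: "x \<in> E" "\<not> 2 \<le> length (snd (phi f N m) x)" using neg mN by auto
    have "snd (phi f N m) x \<noteq> []" using phi_props[of N m x] x mN by auto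
    then obtain y ys where yys: "snd (phi f N m) x = y # ys" by (cases "snd (phi f N m) x") auto
    then have "ys = []" using x(2) by (cases ys) auto
    then have "snd (phi f N m) x = [y]" using yys by simp
    then show ?thesis unfolding Ps_def using x by auto
  qed
  have Psmono: "Ps k \<subseteq> Ps m" if mk: "N \<le> m" "m \<le> k" for m k
  proof
    fix y assume "y \<in> Ps k"
    then obtain x where x: "x \<in> E" "snd (phi f N k) x = [y]" unfolding Ps_def by auto
    then obtain z where "z \<in> E" "snd (phi f N m) z = [y]" using single[of N m k x] mk by auto
    then show "y \<in> Ps m" unfolding Ps_def by auto
  qed
  define c0 where "c0 = (LEAST c. \<exists>m\<ge>N. card (Ps m) = c)"
  have "\<exists>m\<ge>N. card (Ps m) = c0" unfolding c0_def by (rule LeastI_ex) auto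
  then obtain ms where ms: "ms \<ge> N" "card (Ps ms) = c0" by auto
  have cmin: "card (Ps ms) \<le> card (Ps m)" if "m \<ge> N" for m
    unfolding ms(2) c0_def by (rule Least_le) (use that in auto)
  obtain ys where ys: "ys \<in> Ps ms" using Psne[OF ms(1)] by auto
  have ysE: "ys \<in> E" using PsE[OF ms(1)] ys by auto
  have allm: "ys \<in> Ps m" if "m \<ge> N" for m
  proof (cases "m \<le> ms")
    case True then show ?thesis using Psmono[of m ms] that ys by auto
  next
    case False
    have finE: "finite E" using G unfolding is_graph_def by simp
    have fin: "finite (Ps ms)" using finite_subset[OF PsE[OF ms(1)] finE] .
    have sub: "Ps m \<subseteq> Ps ms" using Psmono[of ms m] False ms by auto
    have "card (Ps m) \<le> card (Ps ms)" using card_mono[OF fin sub] .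
    then have "card (Ps m) = card (Ps ms)" using cmin[OF that] by simp
    then have "Ps m = Ps ms" using card_subset_eq[OF fin sub] by simp
    then show ?thesis using ys by simp
  qed
  define Pp where "Pp = (\<lambda>m x. snd (phi f N m) x = [ys] \<or> snd (phi f N m) x = [rv ys])"
  have "(\<forall>n\<ge>N. \<forall>x\<in>E. Pp n x) \<or> (\<exists>M. \<forall>n\<ge>M. \<forall>x\<in>E. \<not> Pp n x)"
  proof (rule fam[OF N1])
    fix n x assume "x \<in> E" "Pp n x"
    then show "Pp n (rv x)" unfolding Pp_def using phi_rv_all[of x N n] rvrv[OF ysE]
      by (auto simp: rev_path_def)
  next
    fix n m x y assume a: "N \<le> n" "n < m" "x \<in> E" "Pp m x" "y \<in> set (snd (phi f n m) x)"
    have "length (snd (phi f N m) x) = 1" using a(4) unfolding Pp_def by auto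
    then obtain z where "z \<in> E" "snd (phi f n m) x = [z]" "snd (phi f N n) z = snd (phi f N m) x"
      using single[of N n m x] a by auto
    then show "Pp n y" using a unfolding Pp_def by auto
  qed
  then show False
  proof
    assume "\<forall>n\<ge>N. \<forall>x\<in>E. Pp n x"
    moreover obtain x where "x \<in> E" "x \<noteq> ys" "x \<noteq> rv ys" using other_edge[OF ysE] by auto
    ultimately have "Pp N x" by auto
    then show False using phi_le[of N N f] \<open>x \<noteq> ys\<close> \<open>x \<noteq> rv ys\<close> unfolding Pp_def by (simp add: gid_def)
  next
    assume "\<exists>M. \<forall>n\<ge>M. \<forall>x\<in>E. \<not> Pp n x"
    then obtain M where M: "\<forall>n\<ge>M. \<forall>x\<in>E. \<not> Pp n x" by auto
    have "ys \<in> Ps (max M N)" using allm by auto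
    then obtain x where "x \<in> E" "snd (phi f N (max M N)) x = [ys]" unfolding Ps_def by auto
    then show False using M unfolding Pp_def by auto
  qed
qed

lemma grow:
  assumes N1: "N \<ge> 1"
  shows "\<exists>m\<ge>N. \<forall>x\<in>E. Suc k \<le> length (snd (phi f N m) x)"
proof (induction k)
  case 0
  have "\<forall>x\<in>E. Suc 0 \<le> length (snd (phi f N N) x)"
    using phi_props[of N N] by (auto simp: Suc_le_eq)
  then show ?case by auto
next
  case (Suc k)
  then obtain m1 where m1: "m1 \<ge> N" "\<forall>x\<in>E. Suc k \<le> length (snd (phi f N m1) x)" by auto
  obtain m2 where m2: "m2 \<ge> m1" "\<forall>x\<in>E. 2 \<le> length (snd (phi f m1 m2) x)"
    using grow1[of m1] m1 N1 by auto
  have "Suc (Suc k) \<le> length (snd (phi f N m2) x)" if x: "x \<in> E" for x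
  proof -
    let ?l = "snd (phi f m1 m2) x"
    have lE: "set ?l \<subseteq> E" using phi_props[of m1 m2 x] m2 x by auto
    have "Suc k * length ?l \<le> sum_list (map (\<lambda>y. length (snd (phi f N m1) y)) ?l)"
      by (rule sum_list_lb) (use lE m1 in auto)
    moreover have "Suc k * 2 \<le> Suc k * length ?l" using m2 x by (intro mult_le_mono2) simp
    moreover have "Suc (Suc k) \<le> Suc k * 2" by simp
    moreover have "length (snd (phi f N m2) x) = sum_list (map (\<lambda>y. length (snd (phi f N m1) y)) ?l)"
      using len_comp[of N m1 m2 x] m1 m2 by simp
    ultimately show ?thesis by linarith
  qed
  then show ?case using m1 m2 by (intro exI[of _ m2]) auto
qed

end


definition wcnt :: "'e \<Rightarrow> ('e \<Rightarrow> 'e) \<Rightarrow> 'e list \<Rightarrow> nat" where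
  "wcnt c rv P = length (filter (\<lambda>y. y = c \<or> y = rv c) P)"

lemma occ_single: "occ [c] P = length (filter (\<lambda>y. y = c) P)"
proof -
  have "{i. i + length [c] \<le> length P \<and> take (length [c]) (drop i P) = [c]} = {i. i < length P \<and> P ! i = c}"
  proof (intro set_eqI iffI)
    fix i assume "i \<in> {i. i + length [c] \<le> length P \<and> take (length [c]) (drop i P) = [c]}"
    then have a: "i < length P" "take 1 (drop i P) = [c]" by auto
    then have "drop i P = P ! i # drop (Suc i) P" using Cons_nth_drop_Suc[of i P] by simp
    then show "i \<in> {i. i < length P \<and> P ! i = c}" using a by auto
  next
    fix i assume "i \<in> {i. i < length P \<and> P ! i = c}"
    then have a: "i < length P" "P ! i = c" by auto
    then have "drop i P = P ! i # drop (Suc i) P" using Cons_nth_drop_Suc[of i P] by simp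
    then show "i \<in> {i. i + length [c] \<le> length P \<and> take (length [c]) (drop i P) = [c]}" using a by auto
  qed
  then show ?thesis unfolding occ_def by (simp add: length_filter_conv_card)
qed

lemma wcnt_split: "c \<noteq> rv c \<Longrightarrow> wcnt c rv P = length (filter (\<lambda>y. y = c) P) + length (filter (\<lambda>y. y = rv c) P)"
  unfolding wcnt_def by (induction P) auto

lemma wcnt_pi: "wcnt c rv (path_image g p) = sum_list (map (\<lambda>y. wcnt c rv (snd g y)) p)"
  unfolding wcnt_def path_image_def by (induction p) auto

lemma two_occ: "2 \<le> length (filter (\<lambda>y. y = d) P) \<Longrightarrow> \<exists>xs ys zs. P = xs @ d # ys @ d # zs"
proof (induction P)
  case Nil then show ?case by simp
next
  case (Cons a P)
  show ?case
  proof (cases "a = d")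
    case True
    then have "1 \<le> length (filter (\<lambda>y. y = d) P)" using Cons.prems by simp
    then have "filter (\<lambda>y. y = d) P \<noteq> []" by auto
    then have "d \<in> set P" by (metis (mono_tags) filter_False)
    then obtain ys zs where "P = ys @ d # zs" by (metis split_list)
    then show ?thesis using True by (intro exI[of _ "[]"] exI[of _ ys] exI[of _ zs]) auto
  next
    case False
    then obtain xs ys zs where "P = xs @ d # ys @ d # zs" using Cons by auto
    then show ?thesis by (intro exI[of _ "a # xs"] exI[of _ ys] exI[of _ zs]) auto
  qed
qed

lemma first_hit:
  assumes "is_path E src rv R" "R \<noteq> []" "tgt src rv (last R) \<in> S"
  shows "\<exists>k. (take k R = [] \<and> src (hd R) \<in> S) \<or>
     (take k R \<noteq> [] \<and> tgt src rv (last (take k R)) \<in> S \<and> (\<forall>y\<in>set (take k R). src y \<notin> S))"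
  using assms
proof (induction R)
  case Nil then show ?case by simp
next
  case (Cons x xs)
  show ?case
  proof (cases "src x \<in> S")
    case True then show ?thesis by (intro exI[of _ 0]) simp
  next
    case nS: False
    show ?thesis
    proof (cases "xs = []")
      case True then show ?thesis using Cons.prems nS by (intro exI[of _ 1]) simp
    next
      case False
      have px: "is_path E src rv xs" "tgt src rv x = src (hd xs)"
        using Cons.prems(1) False by (simp_all add: path_Cons)
      have "tgt src rv (last xs) \<in> S" using Cons.prems False by simp
      then obtain k where k: "(take k xs = [] \<and> src (hd xs) \<in> S) \<or>
         (take k xs \<noteq> [] \<and> tgt src rv (last (take k xs)) \<in> S \<and> (\<forall>y\<in>set (take k xs). src y \<notin> S))"
        using Cons.IH False px by blast
      then show ?thesis
      proof
        assume "take k xs = [] \<and> src (hd xs) \<in> S"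
        then show ?thesis using nS px by (intro exI[of _ 1]) simp
      next
        assume a: "take k xs \<noteq> [] \<and> tgt src rv (last (take k xs)) \<in> S \<and> (\<forall>y\<in>set (take k xs). src y \<notin> S)"
        then show ?thesis using nS by (intro exI[of _ "Suc k"]) simp
      qed
    qed
  qed
qed

lemma tgt_in: "is_path E src rv (xs @ [y]) \<Longrightarrow> w \<in> set xs \<Longrightarrow> tgt src rv w \<in> src ` set (xs @ [y])"
proof (induction xs)
  case Nil then show ?case by simp
next
  case (Cons a xs)
  have p: "is_path E src rv (xs @ [y])" "tgt src rv a = src (hd (xs @ [y]))"
    using Cons.prems(1) by (simp_all add: path_Cons)
  show ?case
  proof (cases "w = a")
    case True
    have "hd (xs @ [y]) \<in> set (xs @ [y])" by (cases xs) auto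
    then show ?thesis using True p by auto
  next
    case False
    then show ?thesis using Cons.IH[OF p(1)] Cons.prems(2) by auto
  qed
qed

context gr
begin

lemma wcnt_rev: "c \<in> E \<Longrightarrow> set P \<subseteq> E \<Longrightarrow> wcnt c rv (rev_path rv P) = wcnt c rv P"
proof (induction P)
  case Nil then show ?case by (simp add: rev_path_def wcnt_def)
next
  case (Cons x P)
  have xE: "x \<in> E" using Cons.prems by auto
  have "(rv x = c \<or> rv x = rv c) \<longleftrightarrow> (x = c \<or> x = rv c)"
    using rvrv[OF xE] rvrv[OF Cons.prems(1)] by metis
  moreover have "rev_path rv (x # P) = rev_path rv P @ [rv x]" by (simp add: rev_path_def)
  ultimately show ?case using Cons by (auto simp: wcnt_def)
qed

lemma he_hit:
  assumes "is_homotopy_equiv V E src rv g" "v \<in> V" "W \<in> loops_at E src rv (fst g v)" "d \<in> set W"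
  shows "\<exists>x\<in>E. d \<in> set (snd g x)"
proof -
  have "bij_betw (\<lambda>p. freered rv (path_image g p)) (loops_at E src rv v) (loops_at E src rv (fst g v))"
    using assms unfolding is_homotopy_equiv_def by auto
  then obtain \<gamma> where g: "\<gamma> \<in> loops_at E src rv v" "W = freered rv (path_image g \<gamma>)"
    using assms(3) unfolding bij_betw_def by auto
  have "set \<gamma> \<subseteq> E" using g(1) unfolding loops_at_def is_path_def by auto
  moreover have "d \<in> set (path_image g \<gamma>)" using g(2) assms(4) freered_set[of rv "path_image g \<gamma>"] by auto
  ultimately show ?thesis unfolding path_image_def by auto
qed

lemma loop_through:
  assumes cg: "connected_graph V E src rv" and pV: "p \<in> V"
    and pL: "is_path E src rv (d # ys @ [d])" and rL: "reduced_path rv (d # ys @ [d])"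
  shows "\<exists>W \<in> loops_at E src rv p. d \<in> set W"
proof -
  define L where "L = d # ys"
  have pL': "is_path E src rv (L @ [d])" and rL': "reduced_path rv (L @ [d])" using pL rL unfolding L_def by simp_all
  have Lp: "is_path E src rv L" and jL: "tgt src rv (last L) = src d"
    using pL' path_append[of E src rv L "[d]"] unfolding L_def by auto
  have Lr: "reduced_path rv L" and jr: "d \<noteq> rv (last L)"
    using rL' red_append[of rv L "[d]"] unfolding L_def by auto
  have dE: "d \<in> E" using pL unfolding is_path_def by auto
  have LLp: "is_path E src rv (L @ L)" using Lp jL path_append[of E src rv L L] unfolding L_def by simp
  have LLr: "reduced_path rv (L @ L)" using Lr jr red_append[of rv L L] unfolding L_def by simp
  define S where "S = src ` set L"
  have sdS: "src d \<in> S" unfolding S_def L_def by simp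
  have sdV: "src d \<in> V" using srcV dE by simp
  obtain R where R: "is_path E src rv R" "R = [] \<longrightarrow> p = src d"
      "R \<noteq> [] \<longrightarrow> src (hd R) = p \<and> tgt src rv (last R) = src d"
    using cg pV sdV unfolding connected_graph_def by blast
  obtain R0 where R0: "is_path E src rv R0" "reduced_path rv R0" "R0 = [] \<longrightarrow> p = src d"
      "R0 \<noteq> [] \<longrightarrow> src (hd R0) = p \<and> tgt src rv (last R0) = src d"
  proof (cases "R = []")
    case True then show ?thesis using that[of "[]"] R unfolding is_path_def reduced_path_def by auto
  next
    case False
    then show ?thesis using that[of "freered rv R"] freered_path[OF R(1) False] R by auto
  qed
  obtain Q where Q: "is_path E src rv Q" "reduced_path rv Q"
    "(Q = [] \<and> p \<in> S) \<or> (Q \<noteq> [] \<and> src (hd Q) = p \<and> tgt src rv (last Q) \<in> S \<and> (\<forall>y\<in>set Q. src y \<notin> S))"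
  proof (cases "R0 = []")
    case True then show ?thesis using that[of "[]"] R0 sdS unfolding is_path_def reduced_path_def by auto
  next
    case False
    then obtain k where k: "(take k R0 = [] \<and> src (hd R0) \<in> S) \<or>
     (take k R0 \<noteq> [] \<and> tgt src rv (last (take k R0)) \<in> S \<and> (\<forall>y\<in>set (take k R0). src y \<notin> S))"
      using first_hit[OF R0(1) False] R0(4) sdS by auto
    have "take k R0 \<noteq> [] \<Longrightarrow> hd (take k R0) = hd R0" by (cases R0; cases k) auto
    then show ?thesis using that[of "take k R0"] path_take[OF R0(1)] red_take[OF R0(2)] k R0(4) False by auto
  qed
  define q where "q = (if Q = [] then p else tgt src rv (last Q))"
  have qS: "q \<in> S" using Q(3) unfolding q_def by auto
  then obtain z where z: "z \<in> set L" "src z = q" unfolding S_def by auto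
  then obtain as bs where Lsplit: "L = as @ z # bs" by (metis split_list)
  define L' where "L' = z # bs @ as"
  have LL1: "L @ L = as @ L' @ (z # bs)" unfolding L'_def Lsplit by simp
  have LL2: "L @ L = as @ (L' @ [z]) @ bs" unfolding L'_def Lsplit by simp
  have pL'z: "is_path E src rv (L' @ [z])" using LLp unfolding LL2 path_append by simp
  have rL'z: "reduced_path rv (L' @ [z])" using LLr unfolding LL2 red_append by simp
  have L'p: "is_path E src rv L'" and L'e: "tgt src rv (last L') = q"
    using pL'z path_append[of E src rv L' "[z]"] z unfolding L'_def by auto
  have L'r: "reduced_path rv L'" and L'j: "z \<noteq> rv (last L')"
    using rL'z red_append[of rv L' "[z]"] unfolding L'_def by auto
  have setL': "set L' = set L" unfolding L'_def Lsplit by auto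
  have dL': "d \<in> set L'" unfolding setL' L_def by simp
  have L'ne: "L' \<noteq> []" unfolding L'_def by simp
  have hdL': "hd L' = z" unfolding L'_def by simp
  have tgtS: "tgt src rv w \<in> S" if "w \<in> set L'" for w
  proof -
    have "tgt src rv w \<in> src ` set (L' @ [z])" using tgt_in[OF pL'z that] .
    moreover have eq: "set (L' @ [z]) = set L" using setL' z by auto
    ultimately show ?thesis unfolding S_def by metis
  qed
  have lastS: "src (last L') \<in> S" using last_in_set[OF L'ne] setL' unfolding S_def by auto
  have L'E: "set L' \<subseteq> E" using L'p unfolding is_path_def by auto
  show ?thesis
  proof (cases "Q = []")
    case True
    then have "p = q" unfolding q_def by simp
    then have "L' \<in> loops_at E src rv p" unfolding loops_at_def using L'p L'r L'e hdL' z by auto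
    then show ?thesis using dL' by auto
  next
    case False
    have QE: "set Q \<subseteq> E" using Q(1) unfolding is_path_def by auto
    have lQE: "last Q \<in> E" using QE last_in_set[OF False] by auto
    have lQS: "src (last Q) \<notin> S" using Q(3) False last_in_set[OF False] by auto
    have q': "q = tgt src rv (last Q)" unfolding q_def using False by simp
    define W where "W = Q @ L' @ rev_path rv Q"
    have RQp: "is_path E src rv (rev_path rv Q)" using path_rev[OF Q(1)] .
    have RQr: "reduced_path rv (rev_path rv Q)" using red_rev[OF Q(1) Q(2)] .
    have RQne: "rev_path rv Q \<noteq> []" using False unfolding rev_path_def by simp
    have hRQ: "hd (rev_path rv Q) = rv (last Q)" using hd_rev_path[OF False] .
    have lRQ: "last (rev_path rv Q) = rv (hd Q)" using last_rev_path[OF False] .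
    have j1: "src (hd (rev_path rv Q)) = q" unfolding hRQ q' src_rv ..
    have j2: "hd (rev_path rv Q) \<noteq> rv (last L')"
    proof
      assume "hd (rev_path rv Q) = rv (last L')"
      then have "rv (last Q) = rv (last L')" using hRQ by simp
      then have "last Q = last L'" using rvrv[OF lQE] rvrv[of "last L'"] L'E last_in_set[OF L'ne] by (metis subsetD)
      then show False using lQS lastS by simp
    qed
    have j3: "hd L' \<noteq> rv (last Q)"
    proof
      assume "hd L' = rv (last Q)"
      then have "last Q = rv z" using hdL' rvrv[OF lQE] by simp
      then have "src (last Q) = tgt src rv z" using src_rv by simp
      moreover have "z \<in> set L'" unfolding L'_def by simp
      ultimately show False using tgtS lQS by simp
    qed
    have j4: "tgt src rv (last Q) = src (hd L')" using hdL' z q' by simp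
    have Wp: "is_path E src rv W" unfolding W_def
      using Q(1) L'p RQp j1 L'e j4 L'ne RQne False by (simp add: path_append)
    have Wr: "reduced_path rv W" unfolding W_def
      using Q(2) L'r RQr j2 j3 L'ne RQne False by (simp add: red_append)
    have "src (hd W) = p" unfolding W_def using Q(3) False by simp
    moreover have "tgt src rv (last W) = p" unfolding W_def using RQne lRQ Q(3) False
      tgt_rv[of "hd Q"] subsetD[OF QE hd_in_set[OF False]] by auto
    ultimately have "W \<in> loops_at E src rv p" unfolding loops_at_def using Wp Wr by simp
    moreover have "d \<in> set W" unfolding W_def using dL' by simp
    ultimately show ?thesis by blast
  qed
qed

end


context us
begin

lemma phi_setE_all: "x \<in> E \<Longrightarrow> set (snd (phi f n m) x) \<subseteq> E"
proof (cases "n \<le> m")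
  case True
  then show "x \<in> E \<Longrightarrow> ?thesis" using phi_props by auto
next
  case False
  then show "x \<in> E \<Longrightarrow> ?thesis" using phi_le[of m n f] by (simp add: gid_def)
qed

lemma main:
  assumes eE: "e \<in> E" and e'E: "e' \<in> E" and K: "K > 0"
  shows "\<exists>N::nat. N > 0 \<and> (\<forall>m. m > N \<longrightarrow>
     real (occ [e'] (snd (phi f 0 m) e) + occ [rv e'] (snd (phi f 0 m) e)) > K)"
proof -
  have ne: "e' \<noteq> rv e'" using rvne[OF e'E] by auto
  define c where "c = (\<lambda>n x. wcnt e' rv (snd (phi f 0 n) x))"
  have occ_eq: "occ [e'] P + occ [rv e'] P = wcnt e' rv P" for P
    using wcnt_split[of e' rv P, OF ne] occ_single[of e' P] occ_single[of "rv e'" P] by simp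
  have c_sum: "c m x = sum_list (map (c n) (snd (phi f n m) x))" if "n \<le> m" for n m x
    unfolding c_def using snd_phi_comp[of 0 n m f x] that wcnt_pi by (simp add: comp_def)
  have c_rv: "c n (rv x) = c n x" if "x \<in> E" for n x
    unfolding c_def using phi_rv_all[OF that] wcnt_rev[OF e'E phi_setE_all[OF that]] by simp
  have famc: "(\<forall>n\<ge>1. \<forall>x\<in>E. c n x \<le> T) \<or> (\<exists>M. \<forall>n\<ge>M. \<forall>x\<in>E. \<not> c n x \<le> T)" for T
  proof (rule fam)
    fix n x assume "x \<in> E" "c n x \<le> T" then show "c n (rv x) \<le> T" using c_rv by simp
  next
    fix n m x y assume a: "1 \<le> n" "n < m" "x \<in> E" "c m x \<le> T" "y \<in> set (snd (phi f n m) x)"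
    have "c n y \<in> set (map (c n) (snd (phi f n m) x))" using a(5) by simp
    then have "c n y \<le> sum_list (map (c n) (snd (phi f n m) x))" by (rule member_le_sum_list) simp_all
    then show "c n y \<le> T" using c_sum[of n m x] a by simp
  qed simp
  define T where "T = nat \<lceil>K\<rceil>"
  have TK: "real T \<ge> K" unfolding T_def using K by linarith
  from famc[of T] show ?thesis
  proof
    assume "\<exists>M. \<forall>n\<ge>M. \<forall>x\<in>E. \<not> c n x \<le> T"
    then obtain M where M: "\<forall>n\<ge>M. \<forall>x\<in>E. \<not> c n x \<le> T" by auto
    have "\<forall>m. m > max M 1 \<longrightarrow> real (occ [e'] (snd (phi f 0 m) e) + occ [rv e'] (snd (phi f 0 m) e)) > K"
    proof (intro allI impI)
      fix m assume "m > max M 1"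
      then have "m \<ge> M" by simp
      then have "\<not> c m e \<le> T" using M eE by blast
      then have "c m e > T" by simp
      then have "real (c m e) > K" using TK by linarith
      then show "real (occ [e'] (snd (phi f 0 m) e) + occ [rv e'] (snd (phi f 0 m) e)) > K"
        using occ_eq unfolding c_def by simp
    qed
    then show ?thesis by (intro exI[of _ "max M 1"]) auto
  next
    assume bnd: "\<forall>n\<ge>1. \<forall>x\<in>E. c n x \<le> T"
    from famc[of 0] show ?thesis
    proof
      assume "\<exists>M. \<forall>n\<ge>M. \<forall>x\<in>E. \<not> c n x \<le> 0"
      then obtain M where M: "\<forall>n\<ge>M. \<forall>x\<in>E. \<not> c n x \<le> 0" by auto
      define m0 where "m0 = max M 1"
      obtain m where m: "m \<ge> m0" "\<forall>x\<in>E. Suc T \<le> length (snd (phi f m0 m) x)"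
        using grow[of m0 T] unfolding m0_def by auto
      let ?l = "snd (phi f m0 m) e"
      have "1 * length ?l \<le> sum_list (map (c m0) ?l)"
      proof (rule sum_list_lb)
        fix y assume "y \<in> set ?l"
        then have "y \<in> E" using phi_setE_all[OF eE] by auto
        moreover have "m0 \<ge> M" unfolding m0_def by simp
        ultimately have "\<not> c m0 y \<le> 0" using M by blast
        then show "1 \<le> c m0 y" by simp
      qed
      moreover have "Suc T \<le> length ?l" using m(2) eE by blast
      ultimately have "Suc T \<le> c m e" using c_sum[of m0 m e] m(1) by simp
      moreover have "c m e \<le> T" using bnd m eE unfolding m0_def by auto
      ultimately show ?thesis by simp
    next
      assume z: "\<forall>n\<ge>1. \<forall>x\<in>E. c n x \<le> 0"
      have f0: "\<forall>x\<in>E. e' \<notin> set (snd (f 0) x) \<and> rv e' \<notin> set (snd (f 0) x)"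
      proof
        fix x assume "x \<in> E"
        then have "c 1 x = 0" using z by auto
        then have "wcnt e' rv (snd (f 0) x) = 0" unfolding c_def using phi_01[of f] by simp
        then show "e' \<notin> set (snd (f 0) x) \<and> rv e' \<notin> set (snd (f 0) x)"
          unfolding wcnt_def by (auto simp: filter_empty_conv)
      qed
      define Pp where "Pp = (\<lambda>n x. wcnt e' rv (snd (phi f 1 n) x) = 0)"
      have "(\<forall>n\<ge>1. \<forall>x\<in>E. Pp n x) \<or> (\<exists>M. \<forall>n\<ge>M. \<forall>x\<in>E. \<not> Pp n x)"
      proof (rule fam)
        fix n x assume "x \<in> E" "Pp n x" then show "Pp n (rv x)"
          unfolding Pp_def using phi_rv_all[of x 1 n] wcnt_rev[OF e'E phi_setE_all[of x 1 n]] by simp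
      next
        fix n m x y assume a: "1 \<le> n" "n < m" "x \<in> E" "Pp m x" "y \<in> set (snd (phi f n m) x)"
        have "wcnt e' rv (snd (phi f 1 m) x) = sum_list (map (\<lambda>y. wcnt e' rv (snd (phi f 1 n) y)) (snd (phi f n m) x))"
          using snd_phi_comp[of 1 n m f x] a wcnt_pi by simp
        then show "Pp n y" using a unfolding Pp_def by simp
      qed simp
      then show ?thesis
      proof
        assume "\<forall>n\<ge>1. \<forall>x\<in>E. Pp n x"
        then have "Pp 1 e'" using e'E by auto
        then show ?thesis unfolding Pp_def using phi_le[of 1 1 f] by (simp add: gid_def wcnt_def)
      next
        assume "\<exists>M. \<forall>n\<ge>M. \<forall>x\<in>E. \<not> Pp n x"
        then obtain M where M: "\<forall>n\<ge>M. \<forall>x\<in>E. \<not> Pp n x" by auto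
        define M1 where "M1 = max M 1"
        obtain m where m: "m \<ge> M1" "\<forall>x\<in>E. Suc 2 \<le> length (snd (phi f M1 m) x)"
          using grow[of M1 2] unfolding M1_def by auto
        let ?l = "snd (phi f M1 m) e"
        define P where "P = snd (phi f 1 m) e"
        have "1 * length ?l \<le> sum_list (map (\<lambda>y. wcnt e' rv (snd (phi f 1 M1) y)) ?l)"
        proof (rule sum_list_lb)
          fix y assume "y \<in> set ?l"
          then have "y \<in> E" using phi_setE_all[OF eE] by auto
          moreover have "M1 \<ge> M" unfolding M1_def by simp
          ultimately have "\<not> Pp M1 y" using M by blast
          then show "1 \<le> wcnt e' rv (snd (phi f 1 M1) y)" unfolding Pp_def by simp
        qed
        moreover have "wcnt e' rv P = sum_list (map (\<lambda>y. wcnt e' rv (snd (phi f 1 M1) y)) ?l)"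
          unfolding P_def using snd_phi_comp[of 1 M1 m f e] m wcnt_pi unfolding M1_def by simp
        moreover have "3 \<le> length ?l"
        proof -
          have "Suc 2 \<le> length ?l" using m(2) eE by blast
          then show ?thesis by simp
        qed
        ultimately have w3: "3 \<le> wcnt e' rv P" by linarith
        have "m \<noteq> M1"
        proof
          assume "m = M1"
          then show False using m(2) eE phi_le[of M1 M1 f] by (simp add: gid_def)
        qed
        moreover have "1 \<le> M1" unfolding M1_def by simp
        ultimately have "1 < m" using m(1) by linarith
        then have Pp: "is_path E src rv P" and Pr: "reduced_path rv P" using phi_red[of 1 m e] eE unfolding P_def by auto
        obtain d where d: "d = e' \<or> d = rv e'" "2 \<le> length (filter (\<lambda>y. y = d) P)"
        proof -
          have "wcnt e' rv P = length (filter (\<lambda>y. y = e') P) + length (filter (\<lambda>y. y = rv e') P)"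
            using wcnt_split[of e' rv P, OF ne] .
          then have "2 \<le> length (filter (\<lambda>y. y = e') P) \<or> 2 \<le> length (filter (\<lambda>y. y = rv e') P)"
            using w3 by linarith
          then show ?thesis using that by blast
        qed
        obtain xs ys zs where Pdec: "P = xs @ d # ys @ d # zs" using two_occ[OF d(2)] by auto
        have Pdec': "P = xs @ (d # ys @ [d]) @ zs" using Pdec by simp
        have pd: "is_path E src rv (d # ys @ [d])" using Pp unfolding Pdec' path_append by simp
        have rd: "reduced_path rv (d # ys @ [d])" using Pr unfolding Pdec' red_append by simp
        obtain v where vV: "v \<in> V" using Vne by auto
        have pV: "fst (f 0) v \<in> V" using morph_f[of 0] vV unfolding is_morphism_def by auto
        obtain W where W: "W \<in> loops_at E src rv (fst (f 0) v)" "d \<in> set W"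
          using loop_through[OF conn pV pd rd] by auto
        obtain x where "x \<in> E" "d \<in> set (snd (f 0) x)" using he_hit[OF he_f vV W] by auto
        then show ?thesis using f0 d(1) by auto
      qed
    qed
  qed
qed

end

theorem lemma4p2:
  fixes V :: "'v set" and E :: "'e set" and src :: "'e \<Rightarrow> 'v" and rv :: "'e \<Rightarrow> 'e"
    and f :: "nat \<Rightarrow> ('v, 'e) gmap"
  assumes "unfolding_seq V E src rv f"
    and "reduced_seq V E src rv f"
  shows "\<forall>e\<in>E. \<forall>e'\<in>E. \<forall>K::real. K > 0 \<longrightarrow>
           (\<exists>N::nat. N > 0 \<and> (\<forall>m. m > N \<longrightarrow>
              real (occ [e'] (snd (phi f 0 m) e) + occ [rv e'] (snd (phi f 0 m) e)) > K))"
proof -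
  have G: "is_graph V E src rv" using assms(1) unfolding unfolding_seq_def by simp
  interpret us V E src rv f by (intro us.intro us_axioms.intro gr.intro G assms)
  show ?thesis using main by blast
qed

end
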